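(* Let $\Omega$ be a topological space, $X$ a locally convex topological vector space over $\mathbb{C}$, $v \in F(\Omega, \mathbb{R}_+)$ and $f \in F(\Omega, X)$ such that $vf$ (respectively $f$) is continuous on $\mathrm{supp}\, v$. Let $A \subset C(\Omega, [0, 1])$, or let $A$ be a self-adjoint subalgebra of $C(\Omega, \mathbb{C})$ such that every $\varphi\in A$ is bounded on $\mathrm{supp}\,v$. If $A$ separates disjoint Lebesgue sets of $vf$ (respectively $f$) in $\mathrm{supp}\, v$, then $A$ $\beta$-separates disjoint Lebesgue sets of $vf$ (respectively $f$) in $\mathrm{supp}\, v$.
   Context: $vf(x)=v(x)f(x)$; $\mathrm{supp}\,v$ is the closure of $\{v\neq0\}$; $X^*$ is the space of continuous linear functionals $X\to\mathbb{C}$. For $h\in F(\Omega,X)$, $S\subset\Omega$, $e^*\in X^*$, $a<b$: $L_a=\{x\in S:\Re e^*(h(x))\le a\}$, $L^b=\{x\in S:\Re e^*(h(x))\ge b\}$. "$A$ separates disjoint Lebesgue sets of $h$ in $S$" means: for all $e^*\in X^*$ and $a<b$ there is $\varphi\in A$ with $\overline{\varphi(L_a)}\cap\overline{\varphi(L^b)}=\emptyset$ (with $\varphi(\emptyset)=\emptyset$). A zero-set is $h^{-1}(0)$ with $h\in C(\Omega,\mathbb{R})$; a $z$-filter is a nonempty family $\mathcal{F}$ of zero-sets with $\emptyset\notin\mathcal{F}$, closed under finite intersections and under passing to larger zero-sets. $\mathcal{F}$ is $(A,v)$-antisymmetric if every $F\in\mathcal{F}$ meets $\mathrm{supp}\,v$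 and, for each $\phi\in A$ with $\bigcap_{F\in\mathcal{F}}\overline{\phi(F\cap\mathrm{supp}\,v)}\subset[0,1]$ (closures in $\mathbb{C}\cup\{\infty\}$), this intersection is a single point. "$A$ $\beta$-separates disjoint Lebesgue sets of $h$ in $\mathrm{supp}\,v$" means: for any $(A,v)$-antisymmetric $z$-filter $\mathcal{F}$, any $e^*\in X^*$ and $a<b$, there is $F\in\mathcal{F}$ with $F\cap L_a=\emptyset$ or $F\cap L^b=\emptyset$, the Lebesgue sets being taken in $S=\mathrm{supp}\,v$. *)

theory Defs
  imports "HOL-Analysis.Analysis"
begin

text \<open>The library has no
class of complex vector spaces, so a complex vector space is modelled as a real
vector space together with a complex structure J (multiplication by i);
complex scalar multiplication is then (a + i b) x = a x + b J x.\<close>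

definition cscale :: "('x::real_vector \<Rightarrow> 'x) \<Rightarrow> complex \<Rightarrow> 'x \<Rightarrow> 'x" where
  "cscale J c x = Re c *\<^sub>R x + Im c *\<^sub>R J x"

definition complex_lctvs :: "('x::{real_vector,topological_space} \<Rightarrow> 'x) \<Rightarrow> bool" where
  "complex_lctvs J \<longleftrightarrow>
     linear J \<and> (\<forall>x. J (J x) = - x) \<and>
     continuous_on UNIV (\<lambda>p::'x \<times> 'x. fst p + snd p) \<and>
     continuous_on UNIV (\<lambda>p::real \<times> 'x. fst p *\<^sub>R snd p) \<and>
     continuous_on UNIV J \<and>
     (\<forall>U. open U \<and> (0::'x) \<in> U \<longrightarrow> (\<exists>V. open V \<and> convex V \<and> 0 \<in> V \<and> V \<subseteq> U))"

definition cdual :: "('x::{real_vector,topological_space} \<Rightarrow> 'x) \<Rightarrow> ('x \<Rightarrow> complex) set" where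
  "cdual J = {e. (\<forall>x y. e (x + y) = e x + e y) \<and> (\<forall>c x. e (cscale J c x) = c * e x)
                 \<and> continuous_on UNIV e}"

definition supp :: "('a::topological_space \<Rightarrow> real) \<Rightarrow> 'a set" where
  "supp v = closure {x. v x \<noteq> 0}"

definition Lsub :: "('a \<Rightarrow> 'x) \<Rightarrow> 'a set \<Rightarrow> ('x \<Rightarrow> complex) \<Rightarrow> real \<Rightarrow> 'a set" where
  "Lsub h S e a = {x \<in> S. Re (e (h x)) \<le> a}"

definition Lsup :: "('a \<Rightarrow> 'x) \<Rightarrow> 'a set \<Rightarrow> ('x \<Rightarrow> complex) \<Rightarrow> real \<Rightarrow> 'a set" where
  "Lsup h S e b = {x \<in> S. Re (e (h x)) \<ge> b}"

definition separates_lebesgue ::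
  "('x::{real_vector,topological_space} \<Rightarrow> 'x) \<Rightarrow> ('a \<Rightarrow> complex) set \<Rightarrow> ('a \<Rightarrow> 'x) \<Rightarrow> 'a set \<Rightarrow> bool" where
  "separates_lebesgue J A h S \<longleftrightarrow>
     (\<forall>e\<in>cdual J. \<forall>a b. a < b \<longrightarrow>
        (\<exists>\<phi>\<in>A. closure (\<phi> ` Lsub h S e a) \<inter> closure (\<phi> ` Lsup h S e b) = {}))"

definition zero_set :: "'a::topological_space set \<Rightarrow> bool" where
  "zero_set Z \<longleftrightarrow> (\<exists>h::'a \<Rightarrow> real. continuous_on UNIV h \<and> Z = h -` {0})"

definition z_filter :: "'a::topological_space set set \<Rightarrow> bool" where
  "z_filter \<F> \<longleftrightarrow> \<F> \<noteq> {} \<and> (\<forall>F\<in>\<F>. zero_set F) \<and> {} \<notin> \<F> \<and>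
     (\<forall>F G. F \<in> \<F> \<longrightarrow> G \<in> \<F> \<longrightarrow> F \<inter> G \<in> \<F>) \<and>
     (\<forall>F G. F \<in> \<F> \<longrightarrow> zero_set G \<longrightarrow> F \<subseteq> G \<longrightarrow> G \<in> \<F>)"

text \<open>C \<union> {\<infinity>} is modelled as complex option (None = \<infinity>); the closure of E \<subseteq> C in the
Riemann sphere is the closure in C plus \<infinity> exactly when E is unbounded.\<close>
definition ext_closure :: "complex set \<Rightarrow> complex option set" where
  "ext_closure E = Some ` closure E \<union> (if bounded E then {} else {None})"

definition antisymmetric ::
  "('a::topological_space \<Rightarrow> complex) set \<Rightarrow> ('a \<Rightarrow> real) \<Rightarrow> 'a set set \<Rightarrow> bool" where
  "antisymmetric A v \<F> \<longleftrightarrow>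
     (\<forall>F\<in>\<F>. F \<inter> supp v \<noteq> {}) \<and>
     (\<forall>\<phi>\<in>A. (\<Inter>F\<in>\<F>. ext_closure (\<phi> ` (F \<inter> supp v))) \<subseteq> Some ` (complex_of_real ` {0..1})
        \<longrightarrow> (\<exists>z. (\<Inter>F\<in>\<F>. ext_closure (\<phi> ` (F \<inter> supp v))) = {z}))"

definition beta_separates_lebesgue ::
  "('x::{real_vector,topological_space} \<Rightarrow> 'x) \<Rightarrow> ('a::topological_space \<Rightarrow> complex) set
    \<Rightarrow> ('a \<Rightarrow> real) \<Rightarrow> ('a \<Rightarrow> 'x) \<Rightarrow> bool" where
  "beta_separates_lebesgue J A v h \<longleftrightarrow>
     (\<forall>\<F>. z_filter \<F> \<and> antisymmetric A v \<F> \<longrightarrow>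
        (\<forall>e\<in>cdual J. \<forall>a b. a < b \<longrightarrow>
           (\<exists>F\<in>\<F>. F \<inter> Lsub h (supp v) e a = {} \<or> F \<inter> Lsup h (supp v) e b = {})))"

text \<open>Self-adjoint subalgebra of C(\<Omega>, C) (not required to contain constants).\<close>
definition selfadjoint_subalgebra :: "('a::topological_space \<Rightarrow> complex) set \<Rightarrow> bool" where
  "selfadjoint_subalgebra A \<longleftrightarrow>
     (\<forall>\<phi>\<in>A. continuous_on UNIV \<phi>) \<and> (\<lambda>_. 0) \<in> A \<and>
     (\<forall>\<phi>\<in>A. \<forall>\<psi>\<in>A. (\<lambda>x. \<phi> x + \<psi> x) \<in> A \<and> (\<lambda>x. \<phi> x * \<psi> x) \<in> A) \<and>
     (\<forall>c. \<forall>\<phi>\<in>A. (\<lambda>x. c * \<phi> x) \<in> A) \<and>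
     (\<forall>\<phi>\<in>A. (\<lambda>x. cnj (\<phi> x)) \<in> A)"

end

theory Submission
  imports Defs
begin

lemma fip_lemma:
  fixes \<phi> :: "'a \<Rightarrow> complex"
  assumes bd: "bounded (\<phi> ` L)" and ne: "\<F> \<noteq> {}"
    and int: "\<forall>F G. F\<in>\<F> \<longrightarrow> G\<in>\<F> \<longrightarrow> F\<inter>G \<in> \<F>"
    and meet: "\<forall>F\<in>\<F>. F \<inter> L \<noteq> {}"
  shows "\<exists>w. \<forall>F\<in>\<F>. w \<in> closure (\<phi> ` (F \<inter> L))"
proof -
  have fin: "\<Inter>G \<in> \<F>" if "finite G" "G \<noteq> {}" "G \<subseteq> \<F>" for G
    using that by (induction rule: finite_ne_induct) (auto simp: int)
  let ?U = "closure (\<phi> ` L)"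
  have cU: "compact ?U" using bd by simp
  have "?U \<inter> \<Inter> ((\<lambda>F. closure (\<phi> ` (F\<inter>L))) ` \<F>) \<noteq> {}"
  proof (rule compact_imp_fip[OF cU])
    fix T assume "T \<in> (\<lambda>F. closure (\<phi> ` (F\<inter>L))) ` \<F>" then show "closed T" by auto
  next
    fix F' assume F': "finite F'" "F' \<subseteq> (\<lambda>F. closure (\<phi> ` (F\<inter>L))) ` \<F>"
    then obtain G where G: "G \<subseteq> \<F>" "finite G" "F' = (\<lambda>F. closure (\<phi> ` (F\<inter>L))) ` G"
      by (meson finite_subset_image)
    show "?U \<inter> \<Inter>F' \<noteq> {}"
    proof (cases "G = {}")
      case True
      from ne obtain F where "F \<in> \<F>" by auto
      with meet have "L \<noteq> {}" by auto
      then have "?U \<noteq> {}" by auto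
      then show ?thesis using True G by auto
    next
      case False
      then have I: "\<Inter>G \<in> \<F>" using fin G by auto
      then obtain x where x: "x \<in> \<Inter>G \<inter> L" using meet by blast
      have "\<phi> x \<in> ?U" using x closure_subset by (metis IntD2 image_eqI subsetD)
      moreover have "\<phi> x \<in> closure (\<phi> ` (F\<inter>L))" if "F \<in> G" for F
      proof -
        have "\<phi> x \<in> \<phi> ` (F\<inter>L)" using x that by auto
        then show ?thesis using closure_subset by (rule subsetD[rotated])
      qed
      then have "\<phi> x \<in> \<Inter>F'" unfolding G(3) by simp
      ultimately show ?thesis by (simp add: disjoint_iff) blast
    qed
  qed
  then show ?thesis by blast
qed

lemma core_lemma:
  assumes anti: "antisymmetric A v \<F>" and ne: "\<F> \<noteq> {}" and psiA: "\<psi> \<in> A"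
    and range: "\<forall>x\<in>supp v. \<psi> x \<in> complex_of_real ` {0..1}"
    and p: "\<forall>F\<in>\<F>. p \<in> closure (\<psi> ` (F \<inter> supp v))"
    and q: "\<forall>F\<in>\<F>. q \<in> closure (\<psi> ` (F \<inter> supp v))"
  shows "p = q"
proof -
  have cl: "closed (complex_of_real ` {0..1})"
    by (intro compact_imp_closed compact_continuous_image) (auto intro!: continuous_intros)
  have bd: "bounded (complex_of_real ` {0..1})"
    by (intro compact_imp_bounded compact_continuous_image) (auto intro!: continuous_intros)
  have eq: "ext_closure (\<psi> ` (F \<inter> supp v)) = Some ` closure (\<psi> ` (F \<inter> supp v))"
    and sub: "closure (\<psi> ` (F \<inter> supp v)) \<subseteq> complex_of_real ` {0..1}" for F
  proof -
    have s: "\<psi> ` (F \<inter> supp v) \<subseteq> complex_of_real ` {0..1}" using range by auto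
    then show "closure (\<psi> ` (F \<inter> supp v)) \<subseteq> complex_of_real ` {0..1}"
      using cl closure_minimal by blast
    have "bounded (\<psi> ` (F \<inter> supp v))" using s bd bounded_subset by blast
    then show "ext_closure (\<psi> ` (F \<inter> supp v)) = Some ` closure (\<psi> ` (F \<inter> supp v))"
      by (simp add: ext_closure_def)
  qed
  have "(\<Inter>F\<in>\<F>. ext_closure (\<psi> ` (F \<inter> supp v))) \<subseteq> Some ` (complex_of_real ` {0..1})"
  proof
    fix y assume y: "y \<in> (\<Inter>F\<in>\<F>. ext_closure (\<psi> ` (F \<inter> supp v)))"
    from ne obtain F where F: "F \<in> \<F>" by auto
    with y have "y \<in> Some ` closure (\<psi> ` (F \<inter> supp v))" using eq by auto
    then show "y \<in> Some ` (complex_of_real ` {0..1})" using sub[of F] by blast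
  qed
  then obtain z where z: "(\<Inter>F\<in>\<F>. ext_closure (\<psi> ` (F \<inter> supp v))) = {z}"
    using anti psiA unfolding antisymmetric_def by blast
  have "Some p \<in> (\<Inter>F\<in>\<F>. ext_closure (\<psi> ` (F \<inter> supp v)))"
       "Some q \<in> (\<Inter>F\<in>\<F>. ext_closure (\<psi> ` (F \<inter> supp v)))"
    using p q unfolding eq by auto
  then show ?thesis using z by auto
qed

lemma clos_comp:
  fixes g :: "complex \<Rightarrow> complex"
  assumes g: "continuous_on UNIV g" and w: "w \<in> closure (\<phi> ` X)"
  shows "g w \<in> closure ((\<lambda>x. g (\<phi> x)) ` X)"
proof -
  have "g ` (\<phi> ` X) \<subseteq> closure ((\<lambda>x. g (\<phi> x)) ` X)"
    using closure_subset[of "(\<lambda>x. g (\<phi> x)) ` X"] by (auto simp: image_comp)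
  then have "g ` closure (\<phi> ` X) \<subseteq> closure ((\<lambda>x. g (\<phi> x)) ` X)"
    by (intro image_closure_subset continuous_on_subset[OF g]) auto
  then show ?thesis using w by blast
qed

lemma gform:
  fixes z u :: complex and c :: real
  shows "complex_of_real c * ((z*cnj z)*(z*cnj z) + (-cnj u)*((z*cnj z)*z)
           + ((-u)*((z*cnj z)*cnj z) + (u*cnj u)*(z*cnj z)))
       = complex_of_real (c * (cmod z)^2 * (cmod (z-u))^2)"
proof -
  have "complex_of_real (c * (cmod z)^2 * (cmod (z-u))^2)
      = complex_of_real c * complex_of_real ((cmod z)^2) * complex_of_real ((cmod (z-u))^2)"
    by simp
  also have "\<dots> = complex_of_real c * (z * cnj z) * ((z-u) * cnj (z-u))"
    by (simp only: complex_norm_square)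
  finally show ?thesis by (simp add: algebra_simps)
qed

lemma poly_sep:
  fixes \<phi> :: "'a::topological_space \<Rightarrow> complex"
  assumes SA: "selfadjoint_subalgebra A" and \<phi>A: "\<phi> \<in> A"
    and bd: "bounded (\<phi> ` S)" and wne: "w \<noteq> w'"
  shows "\<exists>\<psi>\<in>A. (\<forall>x\<in>S. \<psi> x \<in> complex_of_real ` {0..1}) \<and>
           (\<exists>g. continuous_on UNIV g \<and> \<psi> = (\<lambda>x. g (\<phi> x)) \<and> g w \<noteq> g w')"
proof -
  have add: "(\<lambda>x. f x + h x) \<in> A" and mul: "(\<lambda>x. f x * h x) \<in> A"
    if "f \<in> A" "h \<in> A" for f h using SA that unfolding selfadjoint_subalgebra_def by auto
  have sc: "(\<lambda>x. k * f x) \<in> A" if "f \<in> A" for f k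
    using SA that unfolding selfadjoint_subalgebra_def by auto
  have cj: "(\<lambda>x. cnj (f x)) \<in> A" if "f \<in> A" for f
    using SA that unfolding selfadjoint_subalgebra_def by auto
  obtain M0 where M0: "\<forall>y\<in>\<phi> ` S. norm y \<le> M0" using bd bounded_iff by metis
  define M where "M = max M0 0"
  have M: "cmod (\<phi> x) \<le> M" if "x \<in> S" for x using M0 that unfolding M_def by force
  have M0le: "0 \<le> M" unfolding M_def by simp
  define u where "u = (if w \<noteq> 0 then w' else w)"
  define K where "K = M^2 * (M + cmod u)^2"
  define c where "c = 1 / (1 + K)"
  have K0: "0 \<le> K" unfolding K_def by simp
  have c0: "0 < c" unfolding c_def using K0 by simp
  define g where "g = (\<lambda>z. complex_of_real c * ((z*cnj z)*(z*cnj z) + (-cnj u)*((z*cnj z)*z)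
           + ((-u)*((z*cnj z)*cnj z) + (u*cnj u)*(z*cnj z))))"
  have gr: "g z = complex_of_real (c * (cmod z)^2 * (cmod (z-u))^2)" for z
    unfolding g_def by (rule gform)
  have gc: "continuous_on UNIV g" unfolding g_def by (intro continuous_intros)
  define q where "q = (\<lambda>x. \<phi> x * cnj (\<phi> x))"
  have qA: "q \<in> A" unfolding q_def by (intro mul cj \<phi>A)
  have t1: "(\<lambda>x. q x * q x) \<in> A" by (intro mul qA)
  have t2: "(\<lambda>x. (-cnj u) * (q x * \<phi> x)) \<in> A" by (intro sc mul qA \<phi>A)
  have t3: "(\<lambda>x. (-u) * (q x * cnj (\<phi> x))) \<in> A" by (intro sc mul cj qA \<phi>A)
  have t4: "(\<lambda>x. (u * cnj u) * q x) \<in> A" by (intro sc qA)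
  have "(\<lambda>x. (q x * q x + (-cnj u) * (q x * \<phi> x)) + ((-u) * (q x * cnj (\<phi> x)) + (u * cnj u) * q x)) \<in> A"
    using add[OF add[OF t1 t2] add[OF t3 t4]] .
  then have gA: "(\<lambda>x. complex_of_real c * ((q x * q x + (-cnj u) * (q x * \<phi> x)) + ((-u) * (q x * cnj (\<phi> x)) + (u * cnj u) * q x))) \<in> A"
    by (rule sc)
  have geq: "(\<lambda>x. g (\<phi> x)) = (\<lambda>x. complex_of_real c * ((q x * q x + (-cnj u) * (q x * \<phi> x)) + ((-u) * (q x * cnj (\<phi> x)) + (u * cnj u) * q x)))"
    unfolding g_def q_def by simp
  have range: "g (\<phi> x) \<in> complex_of_real ` {0..1}" if x: "x \<in> S" for x
  proof -
    have a: "cmod (\<phi> x) \<le> M" using M x .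
    have b: "cmod (\<phi> x - u) \<le> M + cmod u" using a norm_triangle_ineq4[of "\<phi> x" u] by linarith
    have "(cmod (\<phi> x))^2 * (cmod (\<phi> x - u))^2 \<le> K"
      unfolding K_def by (intro mult_mono power_mono a b) auto
    then have "c * ((cmod (\<phi> x))^2 * (cmod (\<phi> x - u))^2) \<le> c * K"
      using c0 by (intro mult_left_mono) auto
    also have "c * K \<le> 1" unfolding c_def using K0 by (simp add: field_simps)
    finally have le: "c * (cmod (\<phi> x))^2 * (cmod (\<phi> x - u))^2 \<le> 1" by (simp add: mult.assoc)
    have ge: "0 \<le> c * (cmod (\<phi> x))^2 * (cmod (\<phi> x - u))^2" using c0 by simp
    show ?thesis unfolding gr using le ge by (intro imageI) simp
  qed
  have gne: "g w \<noteq> g w'"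
  proof (cases "w = 0")
    case True
    then have "u = w" unfolding u_def by simp
    then have "g w = 0" unfolding gr by simp
    moreover have "g w' \<noteq> 0" unfolding gr using \<open>u = w\<close> True wne c0 by simp
    ultimately show ?thesis by simp
  next
    case False
    then have "u = w'" unfolding u_def by simp
    then have "g w' = 0" unfolding gr by simp
    moreover have "g w \<noteq> 0" unfolding gr using \<open>u = w'\<close> False wne c0 by simp
    ultimately show ?thesis by simp
  qed
  show ?thesis
    by (rule bexI[of _ "\<lambda>x. g (\<phi> x)"]) (use gA geq range gc gne in auto)
qed

lemma main_general:
  fixes J :: "'x::{real_vector,topological_space} \<Rightarrow> 'x"
    and v :: "'a::topological_space \<Rightarrow> real"
    and h :: "'a \<Rightarrow> 'x"
    and A :: "('a \<Rightarrow> complex) set"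
  assumes hA: "A \<subseteq> {\<phi>. continuous_on UNIV \<phi> \<and> range \<phi> \<subseteq> complex_of_real ` {0..1}}
         \<or> (selfadjoint_subalgebra A \<and> (\<forall>\<phi>\<in>A. bounded (\<phi> ` supp v)))"
    and sep: "separates_lebesgue J A h (supp v)"
  shows "beta_separates_lebesgue J A v h"
  unfolding beta_separates_lebesgue_def
proof (intro allI impI ballI)
  fix \<F> e a b
  assume zF: "z_filter \<F> \<and> antisymmetric A v \<F>" and e: "e \<in> cdual J" and ab: "(a::real) < b"
  define La where "La = Lsub h (supp v) e a"
  define Lb where "Lb = Lsup h (supp v) e b"
  show "\<exists>F\<in>\<F>. F \<inter> Lsub h (supp v) e a = {} \<or> F \<inter> Lsup h (supp v) e b = {}"
  proof (rule ccontr)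
    assume "\<not> ?thesis"
    then have mA: "\<forall>F\<in>\<F>. F \<inter> La \<noteq> {}" and mB: "\<forall>F\<in>\<F>. F \<inter> Lb \<noteq> {}"
      unfolding La_def Lb_def by auto
    have "\<forall>a b. a < b \<longrightarrow> (\<exists>\<phi>\<in>A. closure (\<phi> ` Lsub h (supp v) e a) \<inter> closure (\<phi> ` Lsup h (supp v) e b) = {})"
      using sep e unfolding separates_lebesgue_def by (rule bspec)
    then have "\<exists>\<phi>\<in>A. closure (\<phi> ` La) \<inter> closure (\<phi> ` Lb) = {}"
      using ab unfolding La_def Lb_def by simp
    then obtain \<phi> where \<phi>A: "\<phi> \<in> A" and disj: "closure (\<phi> ` La) \<inter> closure (\<phi> ` Lb) = {}"
      by blast
    have LaS: "La \<subseteq> supp v" and LbS: "Lb \<subseteq> supp v"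
      unfolding La_def Lb_def Lsub_def Lsup_def by auto
    have zf: "\<F> \<noteq> {} \<and> (\<forall>F\<in>\<F>. zero_set F) \<and> {} \<notin> \<F> \<and>
     (\<forall>F G. F \<in> \<F> \<longrightarrow> G \<in> \<F> \<longrightarrow> F \<inter> G \<in> \<F>) \<and>
     (\<forall>F G. F \<in> \<F> \<longrightarrow> zero_set G \<longrightarrow> F \<subseteq> G \<longrightarrow> G \<in> \<F>)"
      using zF unfolding z_filter_def by (rule conjunct1)
    have ne: "\<F> \<noteq> {}" using zf by (rule conjunct1)
    have int: "\<forall>F G. F\<in>\<F> \<longrightarrow> G\<in>\<F> \<longrightarrow> F\<inter>G \<in> \<F>"
      using zf by (elim conjE)
    have anti: "antisymmetric A v \<F>" using zF by simp
    have bd: "bounded (\<phi> ` supp v)"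
    proof (cases "A \<subseteq> {\<phi>. continuous_on UNIV \<phi> \<and> range \<phi> \<subseteq> complex_of_real ` {0..1}}")
      case True
      then have "\<phi> ` supp v \<subseteq> complex_of_real ` {0..1}" using \<phi>A by blast
      moreover have "bounded (complex_of_real ` {0..1})"
        by (intro compact_imp_bounded compact_continuous_image) (auto intro!: continuous_intros)
      ultimately show ?thesis using bounded_subset by blast
    next
      case False
      then show ?thesis using hA \<phi>A by blast
    qed
    have bda: "bounded (\<phi> ` La)" using bd LaS bounded_subset image_mono by metis
    have bdb: "bounded (\<phi> ` Lb)" using bd LbS bounded_subset image_mono by metis
    obtain w where w: "\<forall>F\<in>\<F>. w \<in> closure (\<phi> ` (F \<inter> La))"
      using fip_lemma[OF bda ne int mA] by blast
    obtain w' where w': "\<forall>F\<in>\<F>. w' \<in> closure (\<phi> ` (F \<inter> Lb))"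
      using fip_lemma[OF bdb ne int mB] by blast
    have wS: "\<forall>F\<in>\<F>. w \<in> closure (\<phi> ` (F \<inter> supp v))"
    proof
      fix F assume "F \<in> \<F>"
      then have "w \<in> closure (\<phi> ` (F \<inter> La))" using w by blast
      moreover have "closure (\<phi> ` (F \<inter> La)) \<subseteq> closure (\<phi> ` (F \<inter> supp v))"
        using LaS by (intro closure_mono image_mono) auto
      ultimately show "w \<in> closure (\<phi> ` (F \<inter> supp v))" by blast
    qed
    have wS': "\<forall>F\<in>\<F>. w' \<in> closure (\<phi> ` (F \<inter> supp v))"
    proof
      fix F assume "F \<in> \<F>"
      then have "w' \<in> closure (\<phi> ` (F \<inter> Lb))" using w' by blast
      moreover have "closure (\<phi> ` (F \<inter> Lb)) \<subseteq> closure (\<phi> ` (F \<inter> supp v))"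
        using LbS by (intro closure_mono image_mono) auto
      ultimately show "w' \<in> closure (\<phi> ` (F \<inter> supp v))" by blast
    qed
    have wne: "w \<noteq> w'"
    proof -
      obtain F0 where F0: "F0 \<in> \<F>" using ne by blast
      have "w \<in> closure (\<phi> ` La)"
        using w F0 closure_mono[OF image_mono[OF Int_lower2[of F0 La]], of \<phi>] by blast
      moreover have "w' \<in> closure (\<phi> ` Lb)"
        using w' F0 closure_mono[OF image_mono[OF Int_lower2[of F0 Lb]], of \<phi>] by blast
      ultimately show ?thesis using disj by blast
    qed
    show False
    proof (cases "A \<subseteq> {\<phi>. continuous_on UNIV \<phi> \<and> range \<phi> \<subseteq> complex_of_real ` {0..1}}")
      case True
      then have "\<forall>x\<in>supp v. \<phi> x \<in> complex_of_real ` {0..1}" using \<phi>A by blast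
      from core_lemma[OF anti ne \<phi>A this wS wS'] wne show False by simp
    next
      case False
      then have SA: "selfadjoint_subalgebra A" using hA by blast
      obtain \<psi> g where \<psi>A: "\<psi> \<in> A" and rng: "\<forall>x\<in>supp v. \<psi> x \<in> complex_of_real ` {0..1}"
        and gc: "continuous_on UNIV g" and \<psi>g: "\<psi> = (\<lambda>x. g (\<phi> x))" and gne: "g w \<noteq> g w'"
        using poly_sep[OF SA \<phi>A bd wne] by blast
      have p: "\<forall>F\<in>\<F>. g w \<in> closure (\<psi> ` (F \<inter> supp v))"
        using wS clos_comp[OF gc] unfolding \<psi>g by blast
      have q: "\<forall>F\<in>\<F>. g w' \<in> closure (\<psi> ` (F \<inter> supp v))"
        using wS' clos_comp[OF gc] unfolding \<psi>g by blast
      from core_lemma[OF anti ne \<psi>A rng p q] gne show False by simp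
    qed
  qed
qed

theorem lemma3p7:
  fixes J :: "'x::{real_vector,topological_space} \<Rightarrow> 'x"
    and v :: "'a::topological_space \<Rightarrow> real"
    and f :: "'a \<Rightarrow> 'x"
    and A :: "('a \<Rightarrow> complex) set"
  assumes "complex_lctvs J"
    and "\<forall>x. v x \<ge> 0"
    and "A \<subseteq> {\<phi>. continuous_on UNIV \<phi> \<and> range \<phi> \<subseteq> complex_of_real ` {0..1}}
         \<or> (selfadjoint_subalgebra A \<and> (\<forall>\<phi>\<in>A. bounded (\<phi> ` supp v)))"
  shows "(continuous_on (supp v) (\<lambda>x. v x *\<^sub>R f x)
            \<and> separates_lebesgue J A (\<lambda>x. v x *\<^sub>R f x) (supp v)
          \<longrightarrow> beta_separates_lebesgue J A v (\<lambda>x. v x *\<^sub>R f x))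
       \<and> (continuous_on (supp v) f \<and> separates_lebesgue J A f (supp v)
          \<longrightarrow> beta_separates_lebesgue J A v f)"
  using main_general[OF assms(3)] by blast

end
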